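(* For all nonnegative integers $c_<$, $c_=$ and $m$, $$\sum_{a=0}^{m}(a+1)\frac{\binom{c_<}{a}\binom{c_<+c_=-a}{m-a}}{\binom{m}{a}}=\frac{(m+1)(m+2)}{(c_=+1)(c_=+2)}\binom{c_<+c_=+2}{m+2}-\frac{(c_<+1)(c_<-m)}{c_=+1}\binom{c_<}{m}+\frac{(c_<-m)(c_<-m-1)}{c_=+2}\binom{c_<}{m}.$$
   Context: Binomial coefficients use the convention $\binom{p}{q}=0$ when $q>p$ or $q<0$ (for nonnegative integer $p$). *)

theory Defs
  imports Complex_Main
begin

end

theory Submission
  imports Defs
begin

definition gg :: "nat \<Rightarrow> nat \<Rightarrow> nat \<Rightarrow> real" where
  "gg cl ce r = ((real cl + 1) * real r / (real ce + 1) - real r * (real r - 1) / (real ce + 2))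
     * real ((r + ce) choose ce)"

lemma choose_step: "real (Suc r + ce choose ce) * (real r + 1) = (real r + 1 + real ce) * real (r + ce choose ce)"
proof -
  have "(Suc r + ce - ce) * (Suc r + ce choose ce) = (Suc r + ce) * ((Suc r + ce - 1) choose ce)"
    by (rule binomial_absorb_comp)
  then have "(Suc r + ce choose ce) * Suc r = (Suc r + ce) * (r + ce choose ce)" by (simp add: algebra_simps)
  then have "real ((Suc r + ce choose ce) * Suc r) = real ((Suc r + ce) * (r + ce choose ce))" by metis
  then show ?thesis by (simp add: algebra_simps)
qed

lemma gg_alg:
  fixes B r c e :: real
  assumes "e \<ge> 0" "r \<ge> 0"
  shows "((c+1)*(1+r)/(e+1) - (1+r)*(1+r-1)/(e+2)) * ((r+1+e)*B/(r+1))
       - ((c+1)*r/(e+1) - r*(r-1)/(e+2))*B = (c+1-r)*B"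
proof -
  have h: "inverse (e+1) * (e+1) = 1" "inverse (e+2) * (e+2) = 1" "inverse (r+1) * (r+1) = 1" using assms by auto
  show ?thesis unfolding divide_inverse using h by algebra
qed

lemma gg_step: "gg cl ce (Suc r) - gg cl ce r = (real cl + 1 - real r) * real (r + ce choose ce)"
proof -
  have s: "real (Suc r + ce choose ce) = (real r + 1 + real ce) * real (r + ce choose ce) / (real r + 1)"
    using choose_step[of r ce] by (simp add: field_simps)
  show ?thesis unfolding gg_def s of_nat_Suc
    by (rule gg_alg) auto
qed

lemma W_closed:
  "k \<le> cl \<Longrightarrow> (\<Sum>a=0..k. real (a + 1) * real ((cl + ce - a) choose ce))
      = gg cl ce (Suc cl) - gg cl ce (cl - k)"
proof (induction k)
  case 0
  then show ?case using gg_step[of cl ce cl] by simp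
next
  case (Suc k)
  have e: "cl - k = Suc (cl - Suc k)" using Suc.prems by simp
  have f: "cl + ce - Suc k = cl - Suc k + ce" using Suc.prems by simp
  have "(\<Sum>a=0..Suc k. real (a + 1) * real ((cl + ce - a) choose ce))
     = (\<Sum>a=0..k. real (a + 1) * real ((cl + ce - a) choose ce)) + real (Suc k + 1) * real ((cl + ce - Suc k) choose ce)"
    by (rule sum.atLeast0_atMost_Suc)
  also have "\<dots> = gg cl ce (Suc cl) - gg cl ce (cl - k) + real (Suc k + 1) * real ((cl - Suc k + ce) choose ce)"
    using Suc.IH Suc.prems unfolding f by simp
  also have "\<dots> = gg cl ce (Suc cl) - gg cl ce (cl - Suc k)"
  proof -
    have g: "gg cl ce (Suc (cl - Suc k)) - gg cl ce (cl - Suc k) = (real cl + 1 - real (cl - Suc k)) * real ((cl - Suc k) + ce choose ce)"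
      by (rule gg_step)
    have r: "real cl + 1 - real (cl - Suc k) = real (Suc k + 1)" using Suc.prems by (simp add: of_nat_diff)
    show ?thesis using g unfolding r e[symmetric] by simp
  qed
  finally show ?case .
qed

lemma bf: "k \<le> n \<Longrightarrow> d = n - k \<Longrightarrow> real (n choose k) = fact n / (fact k * fact d)"
  by (simp add: binomial_fact)

lemma term_eq:
  assumes am: "a \<le> m" and mn: "m \<le> cl + ce" and ac: "a \<le> cl"
  shows "real (a + 1) * real (cl choose a) * real ((cl + ce - a) choose (m - a)) / real (m choose a)
    = real (cl + ce choose m) / real (cl + ce choose cl) * (real (a + 1) * real ((cl + ce - a) choose ce))"
proof -
  have 1: "real (cl choose a) = fact cl / (fact a * fact (cl - a))" by (rule bf) (use ac in auto)
  have 2: "real ((cl + ce - a) choose (m - a)) = fact (cl + ce - a) / (fact (m - a) * fact (cl + ce - m))"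
    by (rule bf) (use am mn in auto)
  have 3: "real (m choose a) = fact m / (fact a * fact (m - a))" by (rule bf) (use am in auto)
  have 4: "real (cl + ce choose m) = fact (cl + ce) / (fact m * fact (cl + ce - m))" by (rule bf) (use mn in auto)
  have 5: "real (cl + ce choose cl) = fact (cl + ce) / (fact cl * fact ce)" by (rule bf) auto
  have 6: "real ((cl + ce - a) choose ce) = fact (cl + ce - a) / (fact ce * fact (cl - a))"
    by (rule bf) (use ac in auto)
  have q: "x * (Cl/(Fa*Cla)) * (Na/(Ma*D)) / (M/(Fa*Ma)) = A/(M*D)/(A/(Cl*E)) * (x * (Na/(E*Cla)))"
    if "A \<noteq> 0" "Cl \<noteq> 0" "Cla \<noteq> 0" "D \<noteq> 0" "E \<noteq> 0" "M \<noteq> 0" "Fa \<noteq> 0" "Ma \<noteq> 0"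
    for x A Cl Cla D E M Fa Ma Na :: real
    using that by (simp add: divide_simps)
  show ?thesis unfolding 1 2 3 4 5 6 by (rule q; rule fact_nonzero)
qed

lemma L1_alg:
  fixes A C D E M c e m :: real
  assumes "A \<noteq> 0" "C \<noteq> 0" "D \<noteq> 0" "E \<noteq> 0" "M \<noteq> 0" "c + 1 \<noteq> 0" "e + 1 \<noteq> 0" "e + 2 \<noteq> 0"
    "m + 1 \<noteq> 0" "m + 2 \<noteq> 0"
  shows "A / (M * D) / (A / (C * E)) * ((c + 1) * (c + e + 2) / ((e + 1) * (e + 2)) * ((c + e + 1) * A / (E * ((c + 1) * C))))
    = (m + 1) * (m + 2) / ((e + 1) * (e + 2)) * ((c + e + 2) * ((c + e + 1) * A) / ((m + 2) * ((m + 1) * M) * D))"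
  using assms by (simp add: divide_simps)

lemma L1:
  assumes mn: "m \<le> cl + ce"
  shows "real (cl + ce choose m) / real (cl + ce choose cl) * gg cl ce (Suc cl)
    = real ((m + 1) * (m + 2)) / real ((ce + 1) * (ce + 2)) * real ((cl + ce + 2) choose (m + 2))"
proof -
  have 4: "real (cl + ce choose m) = fact (cl + ce) / (fact m * fact (cl + ce - m))" by (rule bf) (use mn in auto)
  have 5: "real (cl + ce choose cl) = fact (cl + ce) / (fact cl * fact ce)" by (rule bf) auto
  have 7: "real ((Suc cl + ce) choose ce) = fact (Suc cl + ce) / (fact ce * fact (Suc cl))" by (rule bf) auto
  have 8: "real ((cl + ce + 2) choose (m + 2)) = fact (cl + ce + 2) / (fact (m + 2) * fact (cl + ce - m))"
    by (rule bf) (use mn in auto)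
  have f1: "(fact (Suc cl + ce) :: real) = (real cl + real ce + 1) * fact (cl + ce)" by (simp add: algebra_simps)
  have f2: "(fact (cl + ce + 2) :: real) = (real cl + real ce + 2) * ((real cl + real ce + 1) * fact (cl + ce))"
    by (simp add: algebra_simps numeral_2_eq_2)
  have f3: "(fact (Suc cl) :: real) = (real cl + 1) * fact cl" by simp
  have f4: "(fact (m + 2) :: real) = (real m + 2) * ((real m + 1) * fact m)"
    by (simp add: algebra_simps numeral_2_eq_2)
  have h: "inverse (fact x) * fact x = (1::real)" for x by simp
  have hr: "inverse (real x + 1) * (real x + 1) = 1" "inverse (real x + 2) * (real x + 2) = 1" for x
    by (auto simp: add_pos_pos)
  have g1: "gg cl ce (Suc cl) = (real cl + 1)*(real cl + real ce + 2)/((real ce+1)*(real ce+2)) * real (Suc cl + ce choose ce)"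
  proof -
    have q: "((c+1)*(1+c)/(e+1) - (1+c)*(1+c-1)/(e+2)) * B = (c+1)*(c+e+2)/((e+1)*(e+2))*B"
      if "inverse (e+1) * (e+1) = 1" "inverse (e+2) * (e+2) = 1" for c e B :: real
      using that unfolding divide_inverse inverse_mult_distrib by algebra
    show ?thesis unfolding gg_def of_nat_Suc by (rule q) (use hr[of ce] in auto)
  qed
  have nz: "real ce + 1 \<noteq> 0" "real ce + 2 \<noteq> 0" "real cl + 1 \<noteq> 0" "real m + 1 \<noteq> 0" "real m + 2 \<noteq> 0"
    by (auto simp: add_pos_pos)
  show ?thesis unfolding g1 4 5 7 8 f1 f2 f3 f4 of_nat_mult of_nat_add of_nat_Suc of_nat_1 of_nat_numeral
    apply (rule L1_alg)
    apply (rule fact_nonzero)+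
    apply (fact nz)+
    done
qed

lemma L2:
  assumes mc: "m \<le> cl"
  shows "real (cl + ce choose m) / real (cl + ce choose cl) * real ((cl - m + ce) choose ce) = real (cl choose m)"
proof -
  have 4: "real (cl + ce choose m) = fact (cl + ce) / (fact m * fact (cl - m + ce))" by (rule bf) (use mc in auto)
  have 5: "real (cl + ce choose cl) = fact (cl + ce) / (fact cl * fact ce)" by (rule bf) auto
  have 6: "real ((cl - m + ce) choose ce) = fact (cl - m + ce) / (fact ce * fact (cl - m))" by (rule bf) auto
  have 9: "real (cl choose m) = fact cl / (fact m * fact (cl - m))" by (rule bf) (use mc in auto)
  have h: "inverse (fact x) * fact x = (1::real)" for x by simp
  have a: "A / (M * D) / (A / (C * E)) * (D / (E * R)) = C / (M * R)"
    if "A \<noteq> 0" "C \<noteq> 0" "D \<noteq> 0" "E \<noteq> 0" "M \<noteq> 0" "R \<noteq> 0" for A C D E M R :: real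
    using that by (simp add: divide_simps)
  show ?thesis unfolding 4 5 6 9 by (rule a; rule fact_nonzero)
qed

theorem lemma3:
  fixes cl ce m :: nat
  shows "(\<Sum>a=0..m. real (a + 1) * real (cl choose a) * real ((cl + ce - a) choose (m - a))
            / real (m choose a))
       = real ((m + 1) * (m + 2)) / real ((ce + 1) * (ce + 2)) * real ((cl + ce + 2) choose (m + 2))
         - (real cl + 1) * (real cl - real m) / (real ce + 1) * real (cl choose m)
         + (real cl - real m) * (real cl - real m - 1) / (real ce + 2) * real (cl choose m)"
proof (cases "m \<le> cl + ce")
  case False
  have z: "real (a + 1) * real (cl choose a) * real ((cl + ce - a) choose (m - a)) / real (m choose a) = 0"
    if "a \<in> {0..m}" for a
  proof (cases "a \<le> cl")
    case True
    then have "(cl + ce - a) choose (m - a) = 0" using False that by (intro binomial_eq_0) auto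
    then show ?thesis by simp
  next
    case False
    then have "cl choose a = 0" by (intro binomial_eq_0) auto
    then show ?thesis by simp
  qed
  have z1: "(cl + ce + 2) choose (m + 2) = 0" using False by (intro binomial_eq_0) auto
  have z2: "cl choose m = 0" using False by (intro binomial_eq_0) auto
  have L0: "(\<Sum>a=0..m. real (a + 1) * real (cl choose a) * real ((cl + ce - a) choose (m - a))
            / real (m choose a)) = 0" using z by (intro sum.neutral) blast
  show ?thesis unfolding L0 z1 z2 by simp
next
  case True
  define K where "K = real (cl + ce choose m) / real (cl + ce choose cl)"
  define f where "f = (\<lambda>a. real (a + 1) * real ((cl + ce - a) choose ce))"
  have t: "real (a + 1) * real (cl choose a) * real ((cl + ce - a) choose (m - a)) / real (m choose a)
      = (if a \<le> cl then K * f a else 0)" if "a \<in> {0..m}" for a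
  proof (cases "a \<le> cl")
    case True
    then show ?thesis unfolding K_def f_def using term_eq[of a m cl ce] that \<open>m \<le> cl + ce\<close> by simp
  next
    case False
    then have "cl choose a = 0" by (intro binomial_eq_0) auto
    then show ?thesis using False by simp
  qed
  have "(\<Sum>a=0..m. real (a + 1) * real (cl choose a) * real ((cl + ce - a) choose (m - a))
            / real (m choose a)) = (\<Sum>a=0..m. if a \<le> cl then K * f a else 0)"
    using t by (rule sum.cong[OF refl])
  also have "\<dots> = (\<Sum>a=0..min m cl. if a \<le> cl then K * f a else 0)"
    by (rule sum.mono_neutral_right) auto
  also have "\<dots> = (\<Sum>a=0..min m cl. K * f a)" by (rule sum.cong) auto
  also have "\<dots> = K * (\<Sum>a=0..min m cl. f a)" by (rule sum_distrib_left[symmetric])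
  also have "\<dots> = K * (gg cl ce (Suc cl) - gg cl ce (cl - min m cl))"
    unfolding f_def by (subst W_closed) auto
  also have "\<dots> = K * gg cl ce (Suc cl) - K * gg cl ce (cl - min m cl)" by (simp add: algebra_simps)
  also have "K * gg cl ce (Suc cl) = real ((m + 1) * (m + 2)) / real ((ce + 1) * (ce + 2)) * real ((cl + ce + 2) choose (m + 2))"
    unfolding K_def by (rule L1) (use True in auto)
  finally have main: "(\<Sum>a=0..m. real (a + 1) * real (cl choose a) * real ((cl + ce - a) choose (m - a))
            / real (m choose a)) = real ((m + 1) * (m + 2)) / real ((ce + 1) * (ce + 2)) * real ((cl + ce + 2) choose (m + 2))
         - K * gg cl ce (cl - min m cl)" .
  show ?thesis
  proof (cases "m \<le> cl")
    case True
    have r: "real (cl - m) = real cl - real m" using True by (simp add: of_nat_diff)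
    have "K * gg cl ce (cl - min m cl) = ((real cl + 1) * (real cl - real m) / (real ce + 1)
        - (real cl - real m) * (real cl - real m - 1) / (real ce + 2)) * (K * real ((cl - m + ce) choose ce))"
      using True unfolding gg_def r by (simp add: min_def)
    also have "K * real ((cl - m + ce) choose ce) = real (cl choose m)" unfolding K_def by (rule L2) (rule True)
    finally show ?thesis unfolding main by (simp add: algebra_simps)
  next
    case False
    have z2: "cl choose m = 0" using False by (intro binomial_eq_0) auto
    have "K * gg cl ce (cl - min m cl) = 0" using False by (simp add: gg_def min_def)
    then show ?thesis unfolding main by (simp add: z2)
  qed
qed

end
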